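(* Let $\mathcal{C}$ be a category and $J$ a directed partially ordered set. Every inverse system $\boldsymbol{X}$ in $\mathcal{C}$ is isomorphic in $pro^J$-$\mathcal{C}$ to a cofinite inverse system $\boldsymbol{X}'$ (i.e. one whose index set is cofinite).
   Context: An inverse system $\boldsymbol{X}=(X_\lambda,p_{\lambda\lambda'},\Lambda)$ in $\mathcal{C}$: $\Lambda$ directed preordered, morphisms $p_{\lambda\lambda'}:X_{\lambda'}\to X_\lambda$ for $\lambda\le\lambda'$, $p_{\lambda\lambda}=1$, $p_{\lambda\lambda'}p_{\lambda'\lambda''}=p_{\lambda\lambda''}$. A directed set is cofinite if each element has finitely many predecessors. A $J$-morphism $(f,f^j_\mu):\boldsymbol{X}\to\boldsymbol{Y}=(Y_\mu,q_{\mu\mu'},M)$: $f:M\to\Lambda$ and $\mathcal{C}$-morphisms $f^j_\mu:X_{f(\mu)}\to Y_\mu$ ($\mu\in M$, $j\in J$) such that for all $\mu\le\mu'$ there exist $\lambda\ge f(\mu),f(\mu')$ and $j_0$ with $f^{j'}_\mu p_{f(\mu)\lambda}=q_{\mu\mu'}f^{j'}_{\mu'}p_{f(\mu')\lambda}$ for all $j'\ge j_0$. Composition $(g,g^j_\nu)(f,f^j_\mu)=(fg,g^j_\nu f^j_{g(\nu)})$, identity $(1_\Lambda,1_{X_\lambda})$. $(f,f^j_\mu)\sim(f',f'^j_\mu)$ iff for every $\mu$ there exist $\lambda\ge f(\mu),f'(\mu)$ and $j_0$ with $f^{j'}_\mu p_{f(\mu)\lambda}=f'^{j'}_\mu p_{f'(\mu)\lambda}$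 for all $j'\ge j_0$. $pro^J$-$\mathcal{C}$ is the resulting quotient category. *)

theory Defs
  imports Main
begin

record ('o, 'm) cat =
  Ob   :: "'o set"
  Ar   :: "'m set"
  Dom  :: "'m \<Rightarrow> 'o"
  Cod  :: "'m \<Rightarrow> 'o"
  Comp :: "'m \<Rightarrow> 'm \<Rightarrow> 'm"   (* Comp C g f = g \<circ> f *)
  Idm  :: "'o \<Rightarrow> 'm"

definition hom :: "('o, 'm) cat \<Rightarrow> 'o \<Rightarrow> 'o \<Rightarrow> 'm \<Rightarrow> bool" where
  "hom C a b f \<longleftrightarrow> f \<in> Ar C \<and> Dom C f = a \<and> Cod C f = b"

definition category :: "('o, 'm) cat \<Rightarrow> bool" where
  "category C \<longleftrightarrow>
     (\<forall>f\<in>Ar C. Dom C f \<in> Ob C \<and> Cod C f \<in> Ob C) \<and>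
     (\<forall>a\<in>Ob C. hom C a a (Idm C a)) \<and>
     (\<forall>f\<in>Ar C. \<forall>g\<in>Ar C. Cod C f = Dom C g \<longrightarrow> hom C (Dom C f) (Cod C g) (Comp C g f)) \<and>
     (\<forall>f\<in>Ar C. Comp C (Idm C (Cod C f)) f = f \<and> Comp C f (Idm C (Dom C f)) = f) \<and>
     (\<forall>f\<in>Ar C. \<forall>g\<in>Ar C. \<forall>h\<in>Ar C. Cod C f = Dom C g \<longrightarrow> Cod C g = Dom C h \<longrightarrow>
        Comp C h (Comp C g f) = Comp C (Comp C h g) f)"

definition directed :: "'a set \<Rightarrow> ('a \<Rightarrow> 'a \<Rightarrow> bool) \<Rightarrow> bool" where
  "directed A le \<longleftrightarrow> A \<noteq> {} \<and> (\<forall>a\<in>A. \<forall>b\<in>A. \<exists>c\<in>A. le a c \<and> le b c)"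

definition directed_preorder :: "'a set \<Rightarrow> ('a \<Rightarrow> 'a \<Rightarrow> bool) \<Rightarrow> bool" where
  "directed_preorder A le \<longleftrightarrow>
     (\<forall>a\<in>A. le a a) \<and> (\<forall>a\<in>A. \<forall>b\<in>A. \<forall>c\<in>A. le a b \<longrightarrow> le b c \<longrightarrow> le a c) \<and>
     directed A le"

definition directed_poset :: "'a set \<Rightarrow> ('a \<Rightarrow> 'a \<Rightarrow> bool) \<Rightarrow> bool" where
  "directed_poset A le \<longleftrightarrow> directed_preorder A le \<and>
     (\<forall>a\<in>A. \<forall>b\<in>A. le a b \<longrightarrow> le b a \<longrightarrow> a = b)"

definition cofinite_set :: "'a set \<Rightarrow> ('a \<Rightarrow> 'a \<Rightarrow> bool) \<Rightarrow> bool" where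
  "cofinite_set A le \<longleftrightarrow> (\<forall>a\<in>A. finite {b\<in>A. le b a})"

record ('i, 'o, 'm) isys =
  Idx  :: "'i set"
  Le   :: "'i \<Rightarrow> 'i \<Rightarrow> bool"
  Obj  :: "'i \<Rightarrow> 'o"
  Bond :: "'i \<Rightarrow> 'i \<Rightarrow> 'm"   (* Bond X l l' : X_l' \<rightarrow> X_l for l \<le> l' *)

definition inverse_system :: "('o, 'm) cat \<Rightarrow> ('i, 'o, 'm) isys \<Rightarrow> bool" where
  "inverse_system C X \<longleftrightarrow>
     directed_preorder (Idx X) (Le X) \<and>
     (\<forall>l\<in>Idx X. Obj X l \<in> Ob C) \<and>
     (\<forall>l\<in>Idx X. \<forall>l'\<in>Idx X. Le X l l' \<longrightarrow> hom C (Obj X l') (Obj X l) (Bond X l l')) \<and>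
     (\<forall>l\<in>Idx X. Bond X l l = Idm C (Obj X l)) \<and>
     (\<forall>l\<in>Idx X. \<forall>l'\<in>Idx X. \<forall>l''\<in>Idx X. Le X l l' \<longrightarrow> Le X l' l'' \<longrightarrow>
        Comp C (Bond X l l') (Bond X l' l'') = Bond X l l'')"

definition cofinite_system :: "('i, 'o, 'm) isys \<Rightarrow> bool" where
  "cofinite_system X \<longleftrightarrow> cofinite_set (Idx X) (Le X)"

definition jmor :: "('o, 'm) cat \<Rightarrow> 'j set \<Rightarrow> ('j \<Rightarrow> 'j \<Rightarrow> bool) \<Rightarrow>
    ('i, 'o, 'm) isys \<Rightarrow> ('k, 'o, 'm) isys \<Rightarrow> ('k \<Rightarrow> 'i) \<Rightarrow> ('j \<Rightarrow> 'k \<Rightarrow> 'm) \<Rightarrow> bool" where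
  "jmor C J leJ X Y f F \<longleftrightarrow>
     (\<forall>\<mu>\<in>Idx Y. f \<mu> \<in> Idx X) \<and>
     (\<forall>j\<in>J. \<forall>\<mu>\<in>Idx Y. hom C (Obj X (f \<mu>)) (Obj Y \<mu>) (F j \<mu>)) \<and>
     (\<forall>\<mu>\<in>Idx Y. \<forall>\<mu>'\<in>Idx Y. Le Y \<mu> \<mu>' \<longrightarrow>
        (\<exists>l\<in>Idx X. Le X (f \<mu>) l \<and> Le X (f \<mu>') l \<and>
          (\<exists>j0\<in>J. \<forall>j'\<in>J. leJ j0 j' \<longrightarrow>
             Comp C (F j' \<mu>) (Bond X (f \<mu>) l) =
             Comp C (Bond Y \<mu> \<mu>') (Comp C (F j' \<mu>') (Bond X (f \<mu>') l)))))"

definition jcomp_idx :: "('k \<Rightarrow> 'i) \<Rightarrow> ('n \<Rightarrow> 'k) \<Rightarrow> ('n \<Rightarrow> 'i)" where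
  "jcomp_idx f g = f \<circ> g"

definition jcomp_mor :: "('o, 'm) cat \<Rightarrow> ('j \<Rightarrow> 'k \<Rightarrow> 'm) \<Rightarrow> ('n \<Rightarrow> 'k) \<Rightarrow> ('j \<Rightarrow> 'n \<Rightarrow> 'm)
    \<Rightarrow> ('j \<Rightarrow> 'n \<Rightarrow> 'm)" where
  "jcomp_mor C F g G = (\<lambda>j \<nu>. Comp C (G j \<nu>) (F j (g \<nu>)))"

definition jid_mor :: "('o, 'm) cat \<Rightarrow> ('i, 'o, 'm) isys \<Rightarrow> ('j \<Rightarrow> 'i \<Rightarrow> 'm)" where
  "jid_mor C X = (\<lambda>j l. Idm C (Obj X l))"

definition jequiv :: "('o, 'm) cat \<Rightarrow> 'j set \<Rightarrow> ('j \<Rightarrow> 'j \<Rightarrow> bool) \<Rightarrow>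
    ('i, 'o, 'm) isys \<Rightarrow> ('k, 'o, 'm) isys \<Rightarrow> ('k \<Rightarrow> 'i) \<Rightarrow> ('j \<Rightarrow> 'k \<Rightarrow> 'm)
    \<Rightarrow> ('k \<Rightarrow> 'i) \<Rightarrow> ('j \<Rightarrow> 'k \<Rightarrow> 'm) \<Rightarrow> bool" where
  "jequiv C J leJ X Y f F f' F' \<longleftrightarrow>
     (\<forall>\<mu>\<in>Idx Y. \<exists>l\<in>Idx X. Le X (f \<mu>) l \<and> Le X (f' \<mu>) l \<and>
        (\<exists>j0\<in>J. \<forall>j'\<in>J. leJ j0 j' \<longrightarrow>
           Comp C (F j' \<mu>) (Bond X (f \<mu>) l) = Comp C (F' j' \<mu>) (Bond X (f' \<mu>) l)))"

definition iso_proJ :: "('o, 'm) cat \<Rightarrow> 'j set \<Rightarrow> ('j \<Rightarrow> 'j \<Rightarrow> bool) \<Rightarrow>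
    ('i, 'o, 'm) isys \<Rightarrow> ('k, 'o, 'm) isys \<Rightarrow> bool" where
  "iso_proJ C J leJ X Y \<longleftrightarrow>
     (\<exists>f F g G. jmor C J leJ X Y f F \<and> jmor C J leJ Y X g G \<and>
        jequiv C J leJ X X (jcomp_idx f g) (jcomp_mor C F g G) id (jid_mor C X) \<and>
        jequiv C J leJ Y Y (jcomp_idx g f) (jcomp_mor C G f F) id (jid_mor C Y))"

end

theory Submission
  imports Defs "HOL-Library.Sublist"
begin

definition lsys :: "('i, 'o, 'm) isys \<Rightarrow> ('i list, 'o, 'm) isys" where
  "lsys X = \<lparr>Idx = {xs. xs \<noteq> [] \<and> set xs \<subseteq> Idx X},
             Le = (\<lambda>xs ys. subseq xs ys \<and> Le X (last xs) (last ys)),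
             Obj = (\<lambda>xs. Obj X (last xs)),
             Bond = (\<lambda>xs ys. Bond X (last xs) (last ys))\<rparr>"

lemma lsys_simps [simp]:
  "Idx (lsys X) = {xs. xs \<noteq> [] \<and> set xs \<subseteq> Idx X}"
  "Le (lsys X) xs ys = (subseq xs ys \<and> Le X (last xs) (last ys))"
  "Obj (lsys X) xs = Obj X (last xs)"
  "Bond (lsys X) xs ys = Bond X (last xs) (last ys)"
  by (simp_all add: lsys_def)

lemma cat_idl: "category C \<Longrightarrow> hom C a b f \<Longrightarrow> Comp C (Idm C b) f = f"
  unfolding category_def hom_def by metis

lemma cat_idr: "category C \<Longrightarrow> hom C a b f \<Longrightarrow> Comp C f (Idm C a) = f"
  unfolding category_def hom_def by metis

lemma cat_id_hom: "category C \<Longrightarrow> a \<in> Ob C \<Longrightarrow> hom C a a (Idm C a)"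
  unfolding category_def by blast

theorem corollary1:
  fixes C :: "('o, 'm) cat" and J :: "'j set" and leJ :: "'j \<Rightarrow> 'j \<Rightarrow> bool"
    and X :: "('i, 'o, 'm) isys"
  assumes "category C"
    and "directed_poset J leJ"
    and "inverse_system C X"
  shows "\<exists>X' :: ('i list, 'o, 'm) isys.
           inverse_system C X' \<and> cofinite_system X' \<and> iso_proJ C J leJ X X'"
proof -
  note C = assms(1)
  obtain j0 where j0: "j0 \<in> J"
    using assms(2) unfolding directed_poset_def directed_preorder_def directed_def by blast
  have refl: "\<And>l. l \<in> Idx X \<Longrightarrow> Le X l l"
    and trans: "\<And>a b c. a \<in> Idx X \<Longrightarrow> b \<in> Idx X \<Longrightarrow> c \<in> Idx X \<Longrightarrow> Le X a b \<Longrightarrow> Le X b c \<Longrightarrow> Le X a c"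
    and ne: "Idx X \<noteq> {}"
    and dir: "\<And>a b. a \<in> Idx X \<Longrightarrow> b \<in> Idx X \<Longrightarrow> \<exists>c\<in>Idx X. Le X a c \<and> Le X b c"
    and ob: "\<And>l. l \<in> Idx X \<Longrightarrow> Obj X l \<in> Ob C"
    and bh: "\<And>l l'. l \<in> Idx X \<Longrightarrow> l' \<in> Idx X \<Longrightarrow> Le X l l' \<Longrightarrow> hom C (Obj X l') (Obj X l) (Bond X l l')"
    and bid: "\<And>l. l \<in> Idx X \<Longrightarrow> Bond X l l = Idm C (Obj X l)"
    and bc: "\<And>l l' l''. l \<in> Idx X \<Longrightarrow> l' \<in> Idx X \<Longrightarrow> l'' \<in> Idx X \<Longrightarrow> Le X l l' \<Longrightarrow> Le X l' l'' \<Longrightarrow>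
        Comp C (Bond X l l') (Bond X l' l'') = Bond X l l''"
    using assms(3) unfolding inverse_system_def directed_preorder_def directed_def by blast+
  have lastin: "\<And>xs. xs \<noteq> [] \<Longrightarrow> set xs \<subseteq> Idx X \<Longrightarrow> last xs \<in> Idx X"
    by auto
  have idid: "\<And>l. l \<in> Idx X \<Longrightarrow> Comp C (Idm C (Obj X l)) (Idm C (Obj X l)) = Idm C (Obj X l)"
    using cat_idl[OF C cat_id_hom[OF C ob]] by blast
  define X' where "X' = lsys X"
  have inv: "inverse_system C X'"
    unfolding inverse_system_def directed_preorder_def directed_def X'_def
  proof (intro conjI ballI impI)
    obtain l where "l \<in> Idx X"
      using ne by blast
    then show "Idx (lsys X) \<noteq> {}" by (auto intro!: exI[of _ "[l]"])
  next
    fix a b assume a: "a \<in> Idx (lsys X)" and b: "b \<in> Idx (lsys X)"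
    then obtain c where c: "c \<in> Idx X" "Le X (last a) c" "Le X (last b) c"
      using dir[of "last a" "last b"] lastin by auto
    show "\<exists>c\<in>Idx (lsys X). Le (lsys X) a c \<and> Le (lsys X) b c"
    proof (intro bexI[of _ "a @ b @ [c]"] conjI)
      show "Le (lsys X) a (a @ b @ [c])" using c by (simp add: subseq_rev_drop_many)
      show "Le (lsys X) b (a @ b @ [c])" using c by (simp add: subseq_rev_drop_many list_emb_append2)
      show "a @ b @ [c] \<in> Idx (lsys X)" using a b c by simp
    qed
  next
    fix a assume "a \<in> Idx (lsys X)" then show "Le (lsys X) a a" using refl lastin by auto
  next
    fix a b c assume "a \<in> Idx (lsys X)" "b \<in> Idx (lsys X)" "c \<in> Idx (lsys X)"
      "Le (lsys X) a b" "Le (lsys X) b c"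
    then show "Le (lsys X) a c" using trans[of "last a" "last b" "last c"]
      by (simp add: lastin) (metis subseq_order.order_trans)
  next
    fix l assume "l \<in> Idx (lsys X)" then show "Obj (lsys X) l \<in> Ob C" using ob lastin by simp
  next
    fix l l' assume "l \<in> Idx (lsys X)" "l' \<in> Idx (lsys X)" "Le (lsys X) l l'"
    then show "hom C (Obj (lsys X) l') (Obj (lsys X) l) (Bond (lsys X) l l')" using bh lastin by simp
  next
    fix l assume "l \<in> Idx (lsys X)" then show "Bond (lsys X) l l = Idm C (Obj (lsys X) l)" using bid lastin by simp
  next
    fix l l' l'' assume "l \<in> Idx (lsys X)" "l' \<in> Idx (lsys X)" "l'' \<in> Idx (lsys X)"
      "Le (lsys X) l l'" "Le (lsys X) l' l''"
    then show "Comp C (Bond (lsys X) l l') (Bond (lsys X) l' l'') = Bond (lsys X) l l''"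
      using bc lastin by simp
  qed
  have cof: "cofinite_system X'"
    unfolding cofinite_system_def cofinite_set_def X'_def
  proof
    fix a assume "a \<in> Idx (lsys X)"
    have "{b \<in> Idx (lsys X). Le (lsys X) b a} \<subseteq> set (subseqs a)" by auto
    then show "finite {b \<in> Idx (lsys X). Le (lsys X) b a}" by (rule finite_subset) simp
  qed
  define f :: "'i list \<Rightarrow> 'i" where "f = last"
  define F :: "'j \<Rightarrow> 'i list \<Rightarrow> 'm" where "F = (\<lambda>j xs. Idm C (Obj X (last xs)))"
  define g :: "'i \<Rightarrow> 'i list" where "g = (\<lambda>l. [l])"
  define G :: "'j \<Rightarrow> 'i \<Rightarrow> 'm" where "G = (\<lambda>j l. Idm C (Obj X l))"
  have m1: "jmor C J leJ X X' f F"
    unfolding jmor_def X'_def f_def F_def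
  proof (intro conjI ballI impI)
    fix j \<mu> assume "\<mu> \<in> Idx (lsys X)"
    then show "hom C (Obj X (last \<mu>)) (Obj (lsys X) \<mu>) (Idm C (Obj X (last \<mu>)))"
      using cat_id_hom[OF C] ob lastin by auto
  next
    fix \<mu> \<mu>' assume m: "\<mu> \<in> Idx (lsys X)" "\<mu>' \<in> Idx (lsys X)" "Le (lsys X) \<mu> \<mu>'"
    then have h: "hom C (Obj X (last \<mu>')) (Obj X (last \<mu>)) (Bond X (last \<mu>) (last \<mu>'))"
      using bh lastin by auto
    show "\<exists>l\<in>Idx X. Le X (last \<mu>) l \<and> Le X (last \<mu>') l \<and>
          (\<exists>j0\<in>J. \<forall>j'\<in>J. leJ j0 j' \<longrightarrow>
             Comp C (Idm C (Obj X (last \<mu>))) (Bond X (last \<mu>) l) =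
             Comp C (Bond (lsys X) \<mu> \<mu>') (Comp C (Idm C (Obj X (last \<mu>'))) (Bond X (last \<mu>') l)))"
      using m j0 h refl lastin idid bid cat_idl[OF C h] cat_idr[OF C h]
      by (intro bexI[of _ "last \<mu>'"]) auto
  qed auto
  have m2: "jmor C J leJ X' X g G"
    unfolding jmor_def X'_def g_def G_def
  proof (intro conjI ballI impI)
    fix j \<mu> assume "\<mu> \<in> Idx X"
    then show "hom C (Obj (lsys X) [\<mu>]) (Obj X \<mu>) (Idm C (Obj X \<mu>))"
      using cat_id_hom[OF C] ob lastin by auto
  next
    fix \<mu> \<mu>' assume m: "\<mu> \<in> Idx X" "\<mu>' \<in> Idx X" "Le X \<mu> \<mu>'"
    then have h: "hom C (Obj X \<mu>') (Obj X \<mu>) (Bond X \<mu> \<mu>')"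
      using bh lastin by auto
    show "\<exists>l\<in>Idx (lsys X). Le (lsys X) [\<mu>] l \<and> Le (lsys X) [\<mu>'] l \<and>
          (\<exists>j0\<in>J. \<forall>j'\<in>J. leJ j0 j' \<longrightarrow>
             Comp C (Idm C (Obj X \<mu>)) (Bond (lsys X) [\<mu>] l) =
             Comp C (Bond X \<mu> \<mu>') (Comp C (Idm C (Obj X \<mu>')) (Bond (lsys X) [\<mu>'] l)))"
      using m j0 h refl lastin idid bid cat_idl[OF C h] cat_idr[OF C h]
      by (intro bexI[of _ "[\<mu>, \<mu>']"]) auto
  qed auto
  have e1: "jequiv C J leJ X X (jcomp_idx f g) (jcomp_mor C F g G) id (jid_mor C X)"
    unfolding jequiv_def jcomp_idx_def jcomp_mor_def jid_mor_def f_def g_def F_def G_def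
  proof
    fix \<mu> assume m: "\<mu> \<in> Idx X"
    have h: "hom C (Obj X \<mu>) (Obj X \<mu>) (Idm C (Obj X \<mu>))" using cat_id_hom[OF C] ob m by auto
    show "\<exists>l\<in>Idx X. Le X ((last \<circ> (\<lambda>l. [l])) \<mu>) l \<and> Le X (id \<mu>) l \<and>
          (\<exists>j0\<in>J. \<forall>j'\<in>J. leJ j0 j' \<longrightarrow>
             Comp C (Comp C (Idm C (Obj X \<mu>)) (Idm C (Obj X (last ((\<lambda>l. [l]) \<mu>)))))
               (Bond X ((last \<circ> (\<lambda>l. [l])) \<mu>) l) =
             Comp C (Idm C (Obj X \<mu>)) (Bond X (id \<mu>) l))"
      using m j0 refl idid bid cat_idl[OF C h] by (intro bexI[of _ \<mu>]) auto
  qed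
  have e2: "jequiv C J leJ X' X' (jcomp_idx g f) (jcomp_mor C G f F) id (jid_mor C X')"
    unfolding jequiv_def jcomp_idx_def jcomp_mor_def jid_mor_def f_def g_def F_def G_def X'_def
  proof
    fix \<mu> assume m: "\<mu> \<in> Idx (lsys X)"
    then have li: "last \<mu> \<in> Idx X" by auto
    have h: "hom C (Obj X (last \<mu>)) (Obj X (last \<mu>)) (Idm C (Obj X (last \<mu>)))"
      using cat_id_hom[OF C] ob li by auto
    have sq: "subseq [last \<mu>] \<mu>"
    proof -
      have ne: "\<mu> \<noteq> []" using m by simp
      have "subseq [last \<mu>] (butlast \<mu> @ [last \<mu>])"
        by (rule list_emb_append2) simp
      then show ?thesis using append_butlast_last_id[OF ne] by simp
    qed
    show "\<exists>l\<in>Idx (lsys X). Le (lsys X) (((\<lambda>l. [l]) \<circ> last) \<mu>) l \<and> Le (lsys X) (id \<mu>) l \<and>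
          (\<exists>j0\<in>J. \<forall>j'\<in>J. leJ j0 j' \<longrightarrow>
             Comp C (Comp C (Idm C (Obj X (last \<mu>))) (Idm C (Obj X (last \<mu>))))
               (Bond (lsys X) (((\<lambda>l. [l]) \<circ> last) \<mu>) l) =
             Comp C (Idm C (Obj (lsys X) \<mu>)) (Bond (lsys X) (id \<mu>) l))"
      using m j0 refl li idid sq cat_idl[OF C h] bid by (intro bexI[of _ \<mu>]) auto
  qed
  show ?thesis
    using inv cof m1 m2 e1 e2 unfolding iso_proJ_def by blast
qed

end
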